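(* Let $k\geq0$, $q\geq1$, $m\ge1$ and $\gamma=(\gamma_1,\ldots,\gamma_m)\in\mathbb{Z}^m$ with $\gamma_1\ge 2$ and $2\le\gamma_{i+1}\le\gamma_i+1$ for all $1\le i<m$. Then \[F^{1234}(k,q,\gamma)=\begin{cases} s^k & m=1,\\ F^{2143}(k,q,\gamma) & q=1,\\ F^{1234}(k,q{-}1,\gamma)+F^{1234}(\gamma_1{+}1{-}\gamma_2{+}k,q,\gamma') & m\geq2,\ q\geq2. \end{cases}\]
   Context: For $\pi\in\{1234,2143\}$ define successor functions on integer triples. $\mathrm{suc}^{2143}(x,y,z)=\emptyset$ if $z\le0$ and for $z\ge1$, $\mathrm{suc}^{2143}(x,y,z)=\{(2,y{+}1,z),\ldots,(x{+}1,y{+}1,z)\}\cup\{(x,x{+}1,z),\ldots,(x,y,z)\}\cup\mathrm{suc}^{2143}(x,x,z{-}1)$. $\mathrm{suc}^{1234}(x,y,1)=\{(2,y{+}1,1),\ldots,(x{+}1,y{+}1,1)\}\cup\{(x,x{+}1,1),\ldots,(x,y,1)\}$ and for $z\ge2$, $\mathrm{suc}^{1234}(x,y,z)=\{(2,y{+}1,z),\ldots,(x{+}1,y{+}1,z)\}\cup\mathrm{suc}^{1234}(x,y,z{-}1)$ (sets of the form $\{(x,x{+}1,\cdot),\ldots,(x,y,\cdot)\}$ are empty if $y\le x$). A path in $\mathcal{P}^{\pi}$ is a finite sequence $P=(v_1,\ldots,v_r)$, $r\ge1$, of points of $\mathbb{Z}^3$ with $v_1=(x,y,z)$, $2\le x\le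 y$, $z\ge1$, and $v_{i+1}\in\mathrm{suc}^{\pi}(v_i)$; its length is $\ell(P)=r$. For $P\in\mathcal{P}^{2143}$, an edge from $(x_1,y_1,z_1)$ to $(x_2,y_2,z_2)$ is recorded if either $z_1=z_2$ and $y_2=y_1+1$, or $z_1>z_2$. For $P\in\mathcal{P}^{1234}$, such an edge is recorded if $y_2=y_1+1$. The signature of $P$ is the tuple of the $x$-coordinate of $v_1$ followed by the $x$-coordinates of the endpoints of the recorded edges, in order. For $k\ge0$, $q\ge1$, $\gamma\in\mathbb{Z}^m$, $m\ge1$, $\mathcal{P}^{\pi}_{k,q,\gamma}$ is the set of paths in $\mathcal{P}^{\pi}$ starting at $(\gamma_1,\gamma_1+k,q)$ with signature $\gamma$, and $F^{\pi}(k,q,\gamma)=\sum_{P\in\mathcal{P}^{\pi}_{k,q,\gamma}}t^{\ell(P)-m}$ (formal power series in $t$), with the convention $F^{\pi}(k,q,\gamma)=0$ if $q\le0$ or $\gamma$ is empty. Write $s=1/(1-t)$ and $\gamma'=(\gamma_2,\ldots,\gamma_m)$ (empty if $m=1$). *)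

theory Defs
  imports "HOL-Computational_Algebra.Formal_Power_Series"
begin

type_synonym pt = "int \<times> int \<times> int"

definition xc :: "pt \<Rightarrow> int" where "xc v = fst v"
definition yc :: "pt \<Rightarrow> int" where "yc v = fst (snd v)"
definition zc :: "pt \<Rightarrow> int" where "zc v = snd (snd v)"

function suc2143 :: "int \<Rightarrow> int \<Rightarrow> int \<Rightarrow> pt set" where
  "suc2143 x y z =
     (if z \<le> 0 then {}
      else {(a, y + 1, z) | a. 2 \<le> a \<and> a \<le> x + 1}
         \<union> {(x, b, z) | b. x + 1 \<le> b \<and> b \<le> y}
         \<union> suc2143 x x (z - 1))"
  by pat_completeness auto
termination by (relation "measure (\<lambda>(x, y, z). nat z)") auto

text \<open>Successor function for pi = 1234 (recursion on z down to level 1;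
  levels z <= 0 are never reached by paths and are set to empty).\<close>
function suc1234 :: "int \<Rightarrow> int \<Rightarrow> int \<Rightarrow> pt set" where
  "suc1234 x y z =
     (if z \<le> 0 then {}
      else if z = 1 then
        {(a, y + 1, 1) | a. 2 \<le> a \<and> a \<le> x + 1}
        \<union> {(x, b, 1) | b. x + 1 \<le> b \<and> b \<le> y}
      else {(a, y + 1, z) | a. 2 \<le> a \<and> a \<le> x + 1} \<union> suc1234 x y (z - 1))"
  by pat_completeness auto
termination by (relation "measure (\<lambda>(x, y, z). nat z)") auto

definition sucP :: "(int \<Rightarrow> int \<Rightarrow> int \<Rightarrow> pt set) \<Rightarrow> pt \<Rightarrow> pt set" where
  "sucP S v = S (xc v) (yc v) (zc v)"

definition rec2143 :: "pt \<Rightarrow> pt \<Rightarrow> bool" where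
  "rec2143 u v \<longleftrightarrow> (zc u = zc v \<and> yc v = yc u + 1) \<or> zc u > zc v"

definition rec1234 :: "pt \<Rightarrow> pt \<Rightarrow> bool" where
  "rec1234 u v \<longleftrightarrow> yc v = yc u + 1"

definition is_path :: "(int \<Rightarrow> int \<Rightarrow> int \<Rightarrow> pt set) \<Rightarrow> pt list \<Rightarrow> bool" where
  "is_path S P \<longleftrightarrow> P \<noteq> [] \<and> 2 \<le> xc (hd P) \<and> xc (hd P) \<le> yc (hd P) \<and> 1 \<le> zc (hd P)
     \<and> (\<forall>i. Suc i < length P \<longrightarrow> P ! Suc i \<in> sucP S (P ! i))"

definition signature :: "(pt \<Rightarrow> pt \<Rightarrow> bool) \<Rightarrow> pt list \<Rightarrow> int list" where
  "signature R P = xc (hd P) # map (\<lambda>(u, v). xc v) (filter (\<lambda>(u, v). R u v) (zip P (tl P)))"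

definition paths_kqg :: "(int \<Rightarrow> int \<Rightarrow> int \<Rightarrow> pt set) \<Rightarrow> (pt \<Rightarrow> pt \<Rightarrow> bool)
    \<Rightarrow> int \<Rightarrow> int \<Rightarrow> int list \<Rightarrow> pt list set" where
  "paths_kqg S R k q \<gamma> = {P. is_path S P \<and> hd P = (hd \<gamma>, hd \<gamma> + k, q) \<and> signature R P = \<gamma>}"

text \<open>Generating function sum over paths of t^(l(P) - m), as a formal power series;
  zero if q <= 0 or gamma empty.\<close>
definition Fgen :: "(int \<Rightarrow> int \<Rightarrow> int \<Rightarrow> pt set) \<Rightarrow> (pt \<Rightarrow> pt \<Rightarrow> bool)
    \<Rightarrow> int \<Rightarrow> int \<Rightarrow> int list \<Rightarrow> rat fps" where
  "Fgen S R k q \<gamma> =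
     (if q \<le> 0 \<or> \<gamma> = [] then 0
      else Abs_fps (\<lambda>n. of_nat (card {P \<in> paths_kqg S R k q \<gamma>. length P = n + length \<gamma>})))"

definition F1234 :: "int \<Rightarrow> int \<Rightarrow> int list \<Rightarrow> rat fps" where
  "F1234 = Fgen suc1234 rec1234"

definition F2143 :: "int \<Rightarrow> int \<Rightarrow> int list \<Rightarrow> rat fps" where
  "F2143 = Fgen suc2143 rec2143"

definition s_ser :: "rat fps" where
  "s_ser = inverse (1 - fps_X)"

end

theory Submission imports Defs begin

lemma s_inv: "(1 - fps_X) * s_ser = 1"
  unfolding s_ser_def by (rule inverse_mult_eq_1') simp

lemma s0: "fps_nth s_ser 0 = 1"
proof -
  have "fps_nth ((1 - fps_X) * s_ser) 0 = 1" using s_inv by simp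
  then show ?thesis by (simp add: algebra_simps)
qed

lemma spow0: "fps_nth (s_ser ^ k) 0 = 1"
  by (simp add: fps_nth_power_0 s0)

lemma spow_rec: "s_ser ^ Suc k = s_ser ^ k + fps_X * s_ser ^ Suc k"
proof -
  have "s_ser ^ k = ((1 - fps_X) * s_ser) * s_ser ^ k" using s_inv by simp
  also have "... = s_ser ^ Suc k - fps_X * s_ser ^ Suc k" by (simp add: algebra_simps)
  finally show ?thesis by (simp add: algebra_simps)
qed

lemma spow_nth: "fps_nth (s_ser ^ Suc k) (Suc n) = fps_nth (s_ser ^ k) (Suc n) + fps_nth (s_ser ^ Suc k) n"
  by (subst spow_rec) simp

lemma spow_0: "fps_nth (s_ser ^ 0) (Suc n) = 0" by simp

declare suc1234.simps[simp del] suc2143.simps[simp del]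

lemma suc1234_mem: "(a,b,c) \<in> suc1234 x y z \<longleftrightarrow> 1 \<le> z \<and> ((2 \<le> a \<and> a \<le> x+1 \<and> b = y+1 \<and> 1 \<le> c \<and> c \<le> z) \<or> (a = x \<and> x+1 \<le> b \<and> b \<le> y \<and> c = 1))"
proof (induction x y z rule: suc1234.induct)
  case (1 x y z)
  show ?case
  proof (cases "z \<le> 0")
    case True then show ?thesis by (subst suc1234.simps) auto
  next
    case False
    show ?thesis
    proof (cases "z = 1")
      case True then show ?thesis by (subst suc1234.simps) auto
    next
      case f2: False
      have "(a,b,c) \<in> suc1234 x y z \<longleftrightarrow> (a,b,c) \<in> {(a, y + 1, z) | a. 2 \<le> a \<and> a \<le> x + 1} \<union> suc1234 x y (z - 1)"
        using False f2 by (subst suc1234.simps) simp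
      also have "... \<longleftrightarrow> 1 \<le> z \<and> ((2 \<le> a \<and> a \<le> x+1 \<and> b = y+1 \<and> 1 \<le> c \<and> c \<le> z) \<or> (a = x \<and> x+1 \<le> b \<and> b \<le> y \<and> c = 1))"
        using 1 False f2 by auto
      finally show ?thesis .
    qed
  qed
qed

lemma suc2143_mem: "(a,b,c) \<in> suc2143 x y 1 \<longleftrightarrow> ((2 \<le> a \<and> a \<le> x+1 \<and> b = y+1 \<and> c = 1) \<or> (a = x \<and> x+1 \<le> b \<and> b \<le> y \<and> c = 1))"
proof -
  have e: "suc2143 x x 0 = {}" by (subst suc2143.simps) simp
  show ?thesis by (subst suc2143.simps) (auto simp: e)
qed

lemma suc1234_mem': "w \<in> sucP suc1234 v \<longleftrightarrow> 1 \<le> zc v \<and> ((2 \<le> xc w \<and> xc w \<le> xc v+1 \<and> yc w = yc v+1 \<and> 1 \<le> zc w \<and> zc w \<le> zc v) \<or> (xc w = xc v \<and> xc v+1 \<le> yc w \<and> yc w \<le> yc v \<and> zc w = 1))"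
  by (cases w; cases v) (simp add: sucP_def xc_def yc_def zc_def suc1234_mem)

lemma suc2143_mem': "zc v = 1 \<Longrightarrow> w \<in> sucP suc2143 v \<longleftrightarrow> ((2 \<le> xc w \<and> xc w \<le> xc v+1 \<and> yc w = yc v+1 \<and> zc w = 1) \<or> (xc w = xc v \<and> xc v+1 \<le> yc w \<and> yc w \<le> yc v \<and> zc w = 1))"
  by (cases w; cases v) (simp add: sucP_def xc_def yc_def zc_def suc2143_mem)

fun chain :: "(int \<Rightarrow> int \<Rightarrow> int \<Rightarrow> pt set) \<Rightarrow> pt \<Rightarrow> pt list \<Rightarrow> bool" where
  "chain S v [] = True"
| "chain S v (w # Q) = (w \<in> sucP S v \<and> chain S w Q)"

fun sigt :: "(pt \<Rightarrow> pt \<Rightarrow> bool) \<Rightarrow> pt \<Rightarrow> pt list \<Rightarrow> int list" where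
  "sigt R v [] = []"
| "sigt R v (w # Q) = (if R v w then [xc w] else []) @ sigt R w Q"

lemma chain_iff: "chain S v Q \<longleftrightarrow> (\<forall>i. Suc i < length (v#Q) \<longrightarrow> (v#Q) ! Suc i \<in> sucP S ((v#Q) ! i))"
proof (induction Q arbitrary: v)
  case Nil then show ?case by simp
next
  case (Cons w Q)
  show ?case
  proof
    assume "chain S v (w # Q)"
    then show "\<forall>i. Suc i < length (v#w#Q) \<longrightarrow> (v#w#Q) ! Suc i \<in> sucP S ((v#w#Q) ! i)"
      using Cons by (auto simp: nth_Cons split: nat.splits)
  next
    assume h: "\<forall>i. Suc i < length (v#w#Q) \<longrightarrow> (v#w#Q) ! Suc i \<in> sucP S ((v#w#Q) ! i)"
    have "w \<in> sucP S v" using h[rule_format, of 0] by simp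
    moreover have "\<forall>i. Suc i < length (w#Q) \<longrightarrow> (w#Q) ! Suc i \<in> sucP S ((w#Q) ! i)"
      using h by (metis Suc_less_eq length_Cons nth_Cons_Suc)
    ultimately show "chain S v (w # Q)" using Cons by simp
  qed
qed

lemma sigt_eq: "map (\<lambda>(u, w). xc w) (filter (\<lambda>(u, w). R u w) (zip (v#Q) Q)) = sigt R v Q"
  by (induction Q arbitrary: v) auto

definition good :: "pt \<Rightarrow> bool" where "good v \<longleftrightarrow> 2 \<le> xc v \<and> xc v \<le> yc v \<and> 1 \<le> zc v"

lemma is_path_iff: "is_path S P \<longleftrightarrow> (\<exists>v Q. P = v # Q \<and> good v \<and> chain S v Q)"
  unfolding is_path_def good_def
  by (cases P) (auto simp: chain_iff)

lemma signature_Cons: "signature R (v # Q) = xc v # sigt R v Q"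
  unfolding signature_def using sigt_eq by (metis list.sel(1,3))


fun dec :: "int \<Rightarrow> int \<Rightarrow> pt list \<Rightarrow> bool" where
  "dec x y [] = True"
| "dec x y (w # Q) = (xc w = x \<and> x + 1 \<le> yc w \<and> yc w \<le> y \<and> zc w = 1 \<and> dec x (yc w) Q)"

lemma chain_dec: "1 \<le> zc v \<Longrightarrow> (chain suc1234 v Q \<and> sigt rec1234 v Q = []) \<longleftrightarrow> dec (xc v) (yc v) Q"
proof (induction Q arbitrary: v)
  case Nil then show ?case by simp
next
  case (Cons w Q)
  show ?case
  proof
    assume h: "chain suc1234 v (w # Q) \<and> sigt rec1234 v (w # Q) = []"
    then have nr: "\<not> rec1234 v w" and s: "sigt rec1234 w Q = []" and c: "chain suc1234 w Q"
      and m: "w \<in> sucP suc1234 v" by (auto split: if_splits)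
    from m nr have w: "xc w = xc v \<and> xc v+1 \<le> yc w \<and> yc w \<le> yc v \<and> zc w = 1"
      by (auto simp: suc1234_mem' rec1234_def)
    have "dec (xc w) (yc w) Q" using Cons.IH[of w] w s c by simp
    then show "dec (xc v) (yc v) (w # Q)" using w by simp
  next
    assume h: "dec (xc v) (yc v) (w # Q)"
    then have w: "xc w = xc v \<and> xc v+1 \<le> yc w \<and> yc w \<le> yc v \<and> zc w = 1" and d: "dec (xc w) (yc w) Q" by auto
    have "chain suc1234 w Q \<and> sigt rec1234 w Q = []" using Cons.IH[of w] w d by simp
    moreover have "w \<in> sucP suc1234 v" using w Cons.prems by (simp add: suc1234_mem')
    moreover have "\<not> rec1234 v w" using w by (simp add: rec1234_def)
    ultimately show "chain suc1234 v (w # Q) \<and> sigt rec1234 v (w # Q) = []" by simp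
  qed
qed

definition D :: "int \<Rightarrow> int \<Rightarrow> nat \<Rightarrow> pt list set" where
  "D x y n = {Q. dec x y Q \<and> length Q = n}"

lemma dec_set: "dec x y Q \<Longrightarrow> set Q \<subseteq> {x} \<times> {x+1..y} \<times> {1}"
proof (induction Q arbitrary: y)
  case Nil then show ?case by simp
next
  case (Cons w Q)
  then have "set Q \<subseteq> {x} \<times> {x+1..yc w} \<times> {1}" by simp
  moreover have "{x} \<times> {x+1..yc w} \<times> {1} \<subseteq> {x} \<times> {x+1..y} \<times> {(1::int)}" using Cons.prems by auto
  moreover have "w \<in> {x} \<times> {x+1..y} \<times> {1}" using Cons.prems
    by (cases w) (auto simp: xc_def yc_def zc_def)
  ultimately show ?case by auto
qed

lemma D_finite: "finite (D x y n)"
proof -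
  have "D x y n \<subseteq> {Q. set Q \<subseteq> {x} \<times> {x+1..y} \<times> {1} \<and> length Q = n}"
    unfolding D_def using dec_set by auto
  moreover have "finite {Q. set Q \<subseteq> {x} \<times> {x+1..y} \<times> {(1::int)} \<and> length Q = n}"
    by (rule finite_lists_length_eq) simp
  ultimately show ?thesis by (rule finite_subset)
qed

lemma D_0: "D x y 0 = {[]}" by (auto simp: D_def)

lemma dec_mono: "dec x y' Q \<Longrightarrow> y' \<le> y \<Longrightarrow> dec x y Q"
  by (cases Q) auto

lemma D_empty: "y \<le> x \<Longrightarrow> D x y (Suc n) = {}"
  by (auto simp: D_def length_Suc_conv)

lemma D_split: "x + 1 \<le> y \<Longrightarrow> D x y (Suc n) = Cons (x,y,1) ` D x y n \<union> D x (y-1) (Suc n)"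
proof
  assume xy: "x + 1 \<le> y"
  show "D x y (Suc n) \<subseteq> Cons (x,y,1) ` D x y n \<union> D x (y-1) (Suc n)"
  proof
    fix P assume "P \<in> D x y (Suc n)"
    then obtain w Q where P: "P = w # Q" and d: "dec x y (w#Q)" and l: "length Q = n"
      by (auto simp: D_def length_Suc_conv)
    show "P \<in> Cons (x,y,1) ` D x y n \<union> D x (y-1) (Suc n)"
    proof (cases "yc w = y")
      case True
      then have "w = (x,y,1)" using d by (cases w) (auto simp: xc_def yc_def zc_def)
      then show ?thesis using P d l True by (auto simp: D_def)
    next
      case False
      then have "dec x (y-1) (w#Q)" using d by auto
      then show ?thesis using P l by (auto simp: D_def)
    qed
  qed
next
  assume xy: "x + 1 \<le> y"
  show "Cons (x,y,1) ` D x y n \<union> D x (y-1) (Suc n) \<subseteq> D x y (Suc n)"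
  proof
    fix P assume "P \<in> Cons (x,y,1) ` D x y n \<union> D x (y-1) (Suc n)"
    then show "P \<in> D x y (Suc n)"
    proof
      assume "P \<in> Cons (x,y,1) ` D x y n"
      then show ?thesis using xy by (auto simp: D_def xc_def yc_def zc_def)
    next
      assume "P \<in> D x (y-1) (Suc n)"
      then show ?thesis using dec_mono[of x "y-1" P y] by (auto simp: D_def)
    qed
  qed
qed

lemma D_card: "of_nat (card (D x (x + int k) n)) = fps_nth (s_ser ^ k) n"
proof (induction n arbitrary: k)
  case 0
  then show ?case by (simp add: D_0 spow0)
next
  case (Suc n)
  note IHn = Suc.IH
  show ?case
  proof (induction k)
    case 0
    then show ?case by (simp add: D_empty)
  next
    case (Suc k)
    have "D x (x + int (Suc k)) (Suc n) = Cons (x, x + int (Suc k), 1) ` D x (x + int (Suc k)) n \<union> D x (x + int k) (Suc n)"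
      using D_split[of x "x + int (Suc k)" n] by simp
    moreover have "Cons (x, x + int (Suc k), 1) ` D x (x + int (Suc k)) n \<inter> D x (x + int k) (Suc n) = {}"
      by (auto simp: D_def yc_def)
    ultimately have "card (D x (x + int (Suc k)) (Suc n)) = card (D x (x + int (Suc k)) n) + card (D x (x + int k) (Suc n))"
      by (simp add: card_Un_disjoint D_finite card_image)
    then show ?case using IHn[of "Suc k"] Suc.IH spow_nth[of k n]
      by (simp add: algebra_simps)
  qed
qed


lemma good_suc: "w \<in> sucP suc1234 v \<Longrightarrow> good v \<Longrightarrow> good w \<and> yc w \<le> yc v + 1 \<and> zc w \<le> zc v"
  by (auto simp: suc1234_mem' good_def)

lemma chain_box: "chain suc1234 v Q \<Longrightarrow> good v \<Longrightarrow> yc v \<le> Y \<Longrightarrow> zc v \<le> Z \<Longrightarrow>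
   set Q \<subseteq> {2..Y + int (length Q)} \<times> {2..Y + int (length Q)} \<times> {1..Z}"
proof (induction Q arbitrary: v Y)
  case Nil then show ?case by simp
next
  case (Cons w Q)
  have w: "good w \<and> yc w \<le> yc v + 1 \<and> zc w \<le> zc v" using Cons.prems good_suc[of w v] by simp
  have "set Q \<subseteq> {2..(Y+1) + int (length Q)} \<times> {2..(Y+1) + int (length Q)} \<times> {1..Z}"
    using Cons.IH[of w "Y+1"] Cons.prems w by simp
  moreover have "w \<in> {2..(Y+1) + int (length Q)} \<times> {2..(Y+1) + int (length Q)} \<times> {1..Z}"
    using w Cons.prems by (cases w) (auto simp: good_def xc_def yc_def zc_def)
  ultimately show ?case by (auto simp: algebra_simps)
qed

lemma fin_paths: "finite {P. is_path suc1234 P \<and> hd P = v \<and> length P = N}"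
proof -
  let ?B = "{2..yc v + int N} \<times> {2..yc v + int N} \<times> {1..zc v}"
  have "{P. is_path suc1234 P \<and> hd P = v \<and> length P = N} \<subseteq> {P. set P \<subseteq> ?B \<and> length P = N}"
  proof (rule subsetI)
    fix P assume "P \<in> {P. is_path suc1234 P \<and> hd P = v \<and> length P = N}"
    then have p: "is_path suc1234 P" and h: "hd P = v" and l: "length P = N" by auto
    then obtain Q where P: "P = hd P # Q" and g: "good (hd P)" and c: "chain suc1234 (hd P) Q"
      by (auto simp: is_path_iff)
    have "set Q \<subseteq> {2..yc (hd P) + int (length Q)} \<times> {2..yc (hd P) + int (length Q)} \<times> {1..zc (hd P)}"
      using chain_box[OF c g] by simp
    moreover have "length Q < N" using P l by (metis impossible_Cons le_eq_less_or_eq length_Cons lessI) 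
    moreover have "hd P \<in> {2..yc (hd P) + int N} \<times> {2..yc (hd P) + int N} \<times> {1..zc (hd P)}"
      using g by (cases "hd P") (auto simp: good_def xc_def yc_def zc_def)
    ultimately have "set P \<subseteq> {2..yc (hd P) + int N} \<times> {2..yc (hd P) + int N} \<times> {1..zc (hd P)}"
      by (subst P) force
    then show "P \<in> {P. set P \<subseteq> ?B \<and> length P = N}" using h l by simp
  qed
  moreover have "finite {P. set P \<subseteq> ?B \<and> length P = N}" by (rule finite_lists_length_eq) simp
  ultimately show ?thesis by (rule finite_subset)
qed

definition A :: "int \<Rightarrow> int \<Rightarrow> int list \<Rightarrow> nat \<Rightarrow> pt list set" where
  "A k q \<gamma> N = {P \<in> paths_kqg suc1234 rec1234 k q \<gamma>. length P = N}"

lemma A_finite: "finite (A k q \<gamma> N)"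
  by (rule finite_subset[OF _ fin_paths[of "(hd \<gamma>, hd \<gamma> + k, q)" N]]) (auto simp: A_def paths_kqg_def)

lemma F1234_A: "q \<ge> 1 \<Longrightarrow> \<gamma> \<noteq> [] \<Longrightarrow> F1234 k q \<gamma> = Abs_fps (\<lambda>n. of_nat (card (A k q \<gamma> (n + length \<gamma>))))"
  by (simp add: F1234_def Fgen_def A_def)

lemma A_mem: "P \<in> A k q (g # r) N \<longleftrightarrow> (\<exists>Q. P = (g, g + k, q) # Q \<and> good (g, g+k, q) \<and> chain suc1234 (g, g + k, q) Q
    \<and> sigt rec1234 (g, g + k, q) Q = r \<and> Suc (length Q) = N)"
  by (auto simp: A_def paths_kqg_def is_path_iff signature_Cons xc_def)

lemma part1:
  assumes "k \<ge> 0" "q \<ge> 1" "g \<ge> 2"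
  shows "F1234 k q [g] = s_ser ^ nat k"
proof -
  let ?v = "(g, g + k, q)"
  have gv: "good ?v" using assms by (simp add: good_def xc_def yc_def zc_def)
  have e: "A k q [g] (Suc n) = Cons ?v ` D g (g + k) n" for n
  proof -
    have "P \<in> A k q [g] (Suc n) \<longleftrightarrow> P \<in> Cons ?v ` D g (g + k) n" for P
      using chain_dec[of ?v] assms gv by (auto simp: A_mem D_def xc_def yc_def zc_def)
    then show ?thesis by blast
  qed
  show ?thesis
  proof (rule fps_ext)
    fix n
    have "fps_nth (F1234 k q [g]) n = of_nat (card (A k q [g] (n + 1)))"
      using assms by (simp add: F1234_A)
    also have "... = of_nat (card (D g (g + int (nat k)) n))" using assms by (simp add: e card_image)
    also have "... = fps_nth (s_ser ^ nat k) n" by (rule D_card)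
    finally show "fps_nth (F1234 k q [g]) n = fps_nth (s_ser ^ nat k) n" .
  qed
qed


lemma chain_eq: "zc v = 1 \<Longrightarrow> (chain suc1234 v Q \<longleftrightarrow> chain suc2143 v Q) \<and>
   (chain suc1234 v Q \<longrightarrow> sigt rec1234 v Q = sigt rec2143 v Q)"
proof (induction Q arbitrary: v)
  case Nil then show ?case by simp
next
  case (Cons w Q)
  have m: "w \<in> sucP suc1234 v \<longleftrightarrow> w \<in> sucP suc2143 v"
    using Cons.prems by (auto simp: suc1234_mem' suc2143_mem')
  have z: "w \<in> sucP suc1234 v \<Longrightarrow> zc w = 1"
    using Cons.prems by (auto simp: suc1234_mem')
  have r: "zc w = 1 \<Longrightarrow> rec1234 v w = rec2143 v w"
    using Cons.prems by (auto simp: rec1234_def rec2143_def)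
  show ?case using m z r Cons.IH[of w] by auto
qed

lemma part2:
  assumes "\<gamma> \<noteq> []"
  shows "F1234 k 1 \<gamma> = F2143 k 1 \<gamma>"
proof -
  have "paths_kqg suc1234 rec1234 k 1 \<gamma> = paths_kqg suc2143 rec2143 k 1 \<gamma>"
  proof -
    have "P \<in> paths_kqg suc1234 rec1234 k 1 \<gamma> \<longleftrightarrow> P \<in> paths_kqg suc2143 rec2143 k 1 \<gamma>" for P
    proof (cases P)
      case Nil then show ?thesis by (simp add: paths_kqg_def is_path_def)
    next
      case (Cons v Q)
      show ?thesis
      proof (cases "v = (hd \<gamma>, hd \<gamma> + k, 1)")
        case True
        then have "zc v = 1" by (simp add: zc_def)
        then show ?thesis using chain_eq[of v Q] Cons
          by (auto simp: paths_kqg_def is_path_iff signature_Cons)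
      next
        case False then show ?thesis using Cons by (simp add: paths_kqg_def)
      qed
    qed
    then show ?thesis by blast
  qed
  then show ?thesis by (simp add: F1234_def F2143_def Fgen_def)
qed


lemma sigt_y: "yc v = yc v' \<Longrightarrow> sigt rec1234 v Q = sigt rec1234 v' Q"
  by (cases Q) (auto simp: rec1234_def)

lemma A_mem2: "P \<in> A k q (g1 # g2 # r) (Suc (Suc N)) \<longleftrightarrow> (\<exists>w Q. P = (g1, g1 + k, q) # w # Q \<and> good (g1, g1+k, q)
    \<and> w \<in> sucP suc1234 (g1, g1 + k, q) \<and> chain suc1234 w Q
    \<and> sigt rec1234 (g1, g1 + k, q) (w # Q) = g2 # r \<and> length Q = N)"
  unfolding A_mem by (auto simp: length_Suc_conv simp del: sigt.simps)

lemma part3: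
  assumes q2: "q \<ge> 2" and g2: "2 \<le> g2" "g2 \<le> g1 + 1" and k: "k \<ge> 0" and g1: "g1 \<ge> 2"
  shows "card (A k q (g1#g2#r) (Suc (Suc N))) = card (A k (q-1) (g1#g2#r) (Suc (Suc N))) + card (A (g1+1-g2+k) q (g2#r) (Suc N))"
proof -
  define v where "v = (g1, g1+k, q)"
  define v' where "v' = (g1, g1+k, q-1)"
  define k' where "k' = g1+1-g2+k"
  define u where "u = (g2, g1+k+1, q)"
  have gv: "good v" "good v'" using assms by (auto simp: good_def v_def v'_def xc_def yc_def zc_def)
  have gu: "good u" using assms by (auto simp: good_def u_def xc_def yc_def zc_def)
  have uk: "(g2, g2 + k', q) = u" by (simp add: u_def k'_def)
  have sy: "sigt rec1234 v Q = sigt rec1234 v' Q" for Q by (rule sigt_y) (simp add: v_def v'_def yc_def)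
  have Cm: "P \<in> A k' q (g2#r) (Suc N) \<longleftrightarrow> (\<exists>Q. P = u # Q \<and> chain suc1234 u Q \<and> sigt rec1234 u Q = r \<and> length Q = N)" for P
    using gu unfolding A_mem uk by auto
  have Am: "P \<in> A k q (g1#g2#r) (Suc (Suc N)) \<longleftrightarrow> (\<exists>w Q. P = v # w # Q
    \<and> w \<in> sucP suc1234 v \<and> chain suc1234 w Q \<and> sigt rec1234 v (w # Q) = g2 # r \<and> length Q = N)" for P
    using gv unfolding A_mem2 v_def by auto
  have A'm: "P \<in> A k (q-1) (g1#g2#r) (Suc (Suc N)) \<longleftrightarrow> (\<exists>w Q. P = v' # w # Q
    \<and> w \<in> sucP suc1234 v' \<and> chain suc1234 w Q \<and> sigt rec1234 v (w # Q) = g2 # r \<and> length Q = N)" for P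
    using gv unfolding A_mem2 v'_def sy by (auto simp: v'_def)
  have zv: "xc v = g1" "yc v = g1 + k" "zc v = q" "xc v' = g1" "yc v' = g1 + k" "zc v' = q - 1"
    by (simp_all add: v_def v'_def xc_def yc_def zc_def)
  have sv: "w \<in> sucP suc1234 v \<longleftrightarrow> w \<in> sucP suc1234 v' \<or> (2 \<le> xc w \<and> xc w \<le> g1 + 1 \<and> yc w = g1 + k + 1 \<and> zc w = q)" for w
    using zv q2 by (auto simp: suc1234_mem')
  have sv': "w \<in> sucP suc1234 v' \<Longrightarrow> zc w \<le> q - 1" for w
    using zv by (auto simp: suc1234_mem')
  have eq: "A k q (g1#g2#r) (Suc (Suc N)) = (\<lambda>P. v # tl P) ` A k (q-1) (g1#g2#r) (Suc (Suc N)) \<union> Cons v ` A k' q (g2#r) (Suc N)"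
  proof (rule set_eqI)
    fix P
    show "P \<in> A k q (g1#g2#r) (Suc (Suc N)) \<longleftrightarrow> P \<in> (\<lambda>P. v # tl P) ` A k (q-1) (g1#g2#r) (Suc (Suc N)) \<union> Cons v ` A k' q (g2#r) (Suc N)"
    proof
      assume "P \<in> A k q (g1#g2#r) (Suc (Suc N))"
      then obtain w Q where P: "P = v # w # Q" and w: "w \<in> sucP suc1234 v" and c: "chain suc1234 w Q"
        and s: "sigt rec1234 v (w # Q) = g2 # r" and l: "length Q = N" using Am by blast
      show "P \<in> (\<lambda>P. v # tl P) ` A k (q-1) (g1#g2#r) (Suc (Suc N)) \<union> Cons v ` A k' q (g2#r) (Suc N)"
      proof (cases "w \<in> sucP suc1234 v'")
        case True
        then have "v' # w # Q \<in> A k (q-1) (g1#g2#r) (Suc (Suc N))" using A'm c s l by blast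
        then show ?thesis using P by (metis (no_types, lifting) UnI1 image_eqI list.sel(3))
      next
        case False
        then have w2: "2 \<le> xc w \<and> xc w \<le> g1 + 1 \<and> yc w = g1 + k + 1 \<and> zc w = q" using sv w by blast
        then have "rec1234 v w" using zv by (simp add: rec1234_def)
        then have "xc w = g2" and s2: "sigt rec1234 w Q = r" using s by auto
        then have "w = u" using w2 by (cases w) (simp add: u_def xc_def yc_def zc_def)
        then have "w # Q \<in> A k' q (g2#r) (Suc N)" using Cm c s2 l by blast
        then show ?thesis using P by blast
      qed
    next
      assume "P \<in> (\<lambda>P. v # tl P) ` A k (q-1) (g1#g2#r) (Suc (Suc N)) \<union> Cons v ` A k' q (g2#r) (Suc N)"
      then show "P \<in> A k q (g1#g2#r) (Suc (Suc N))"
      proof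
        assume "P \<in> (\<lambda>P. v # tl P) ` A k (q-1) (g1#g2#r) (Suc (Suc N))"
        then obtain P0 where P0: "P0 \<in> A k (q-1) (g1#g2#r) (Suc (Suc N))" and PP: "P = v # tl P0" by blast
        then obtain w Q where P0e: "P0 = v' # w # Q" and w: "w \<in> sucP suc1234 v'" and c: "chain suc1234 w Q"
          and s: "sigt rec1234 v (w # Q) = g2 # r" and l: "length Q = N" unfolding A'm by blast
        have P: "P = v # w # Q" using PP P0e by simp
        have "w \<in> sucP suc1234 v" using sv w by blast
        then show ?thesis unfolding Am using P c s l by blast
      next
        assume "P \<in> Cons v ` A k' q (g2#r) (Suc N)"
        then obtain Q where P: "P = v # u # Q" and c: "chain suc1234 u Q"
          and s: "sigt rec1234 u Q = r" and l: "length Q = N" using Cm by blast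
        have uu: "xc u = g2" "yc u = g1 + k + 1" "zc u = q" by (simp_all add: u_def xc_def yc_def zc_def)
        have "u \<in> sucP suc1234 v" using sv uu g2 by simp
        moreover have "rec1234 v u" using zv uu by (simp add: rec1234_def)
        moreover have "sigt rec1234 v (u # Q) = g2 # r" using \<open>rec1234 v u\<close> s uu by simp
        ultimately show ?thesis unfolding Am using P c l by blast
      qed
    qed
  qed
  have hdA: "P = v' # w # Q \<and> w \<in> sucP suc1234 v'" if hP: "P \<in> A k (q-1) (g1#g2#r) (Suc (Suc N))" and hw: "w = hd (tl P)" and hQ: "Q = tl (tl P)" for P w Q
  proof -
    obtain w' Q' where "P = v' # w' # Q'" "w' \<in> sucP suc1234 v'" using hP unfolding A'm by blast
    then show ?thesis using hw hQ by simp
  qed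
  have disj: "(\<lambda>P. v # tl P) ` A k (q-1) (g1#g2#r) (Suc (Suc N)) \<inter> Cons v ` A k' q (g2#r) (Suc N) = {}"
  proof -
    have "zc (hd (tl P)) \<le> q - 1" if hP: "P \<in> (\<lambda>P. v # tl P) ` A k (q-1) (g1#g2#r) (Suc (Suc N))" for P
    proof -
      obtain P0 where P0: "P0 \<in> A k (q-1) (g1#g2#r) (Suc (Suc N))" and PP: "P = v # tl P0" using hP by blast
      have "P0 = v' # hd (tl P0) # tl (tl P0) \<and> hd (tl P0) \<in> sucP suc1234 v'" using hdA[OF P0 refl refl] by simp
      then show ?thesis using PP sv' by (metis list.sel(1,3))
    qed
    moreover have "zc (hd (tl P)) = q" if hP: "P \<in> Cons v ` A k' q (g2#r) (Suc N)" for P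
    proof -
      obtain P0 where P0: "P0 \<in> A k' q (g2#r) (Suc N)" and PP: "P = v # P0" using hP by blast
      obtain Q where "P0 = u # Q" using P0 unfolding Cm by blast
      then show ?thesis using PP by (simp add: u_def zc_def)
    qed
    ultimately show ?thesis by fastforce
  qed
  have inj: "inj_on (\<lambda>P. v # tl P) (A k (q-1) (g1#g2#r) (Suc (Suc N)))"
  proof (rule inj_onI)
    fix P P' assume a: "P \<in> A k (q-1) (g1#g2#r) (Suc (Suc N))" "P' \<in> A k (q-1) (g1#g2#r) (Suc (Suc N))"
      "v # tl P = v # tl P'"
    have "P = v' # tl P" "P' = v' # tl P'" using hdA[OF a(1) refl refl] hdA[OF a(2) refl refl] by (metis list.sel(3))+
    then show "P = P'" using a(3) by (metis list.inject)
  qed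
  show ?thesis unfolding eq k'_def[symmetric]
    by (subst card_Un_disjoint) (simp_all add: A_finite disj card_image inj)
qed


theorem lemma3p5:
  fixes k q :: int and \<gamma> :: "int list"
  assumes "k \<ge> 0" and "q \<ge> 1" and "length \<gamma> \<ge> 1"
    and "\<gamma> ! 0 \<ge> 2"
    and "\<forall>i. Suc i < length \<gamma> \<longrightarrow> 2 \<le> \<gamma> ! Suc i \<and> \<gamma> ! Suc i \<le> \<gamma> ! i + 1"
  shows "(length \<gamma> = 1 \<longrightarrow> F1234 k q \<gamma> = s_ser ^ nat k)
       \<and> (q = 1 \<longrightarrow> F1234 k q \<gamma> = F2143 k q \<gamma>)
       \<and> (length \<gamma> \<ge> 2 \<and> q \<ge> 2 \<longrightarrow>
            F1234 k q \<gamma> = F1234 k (q - 1) \<gamma> + F1234 (\<gamma> ! 0 + 1 - \<gamma> ! 1 + k) q (tl \<gamma>))"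
proof (intro conjI impI)
  assume "length \<gamma> = 1"
  then have "\<gamma> = [\<gamma> ! 0]" by (cases \<gamma>) auto
  then obtain g where "\<gamma> = [g]" by blast
  then show "F1234 k q \<gamma> = s_ser ^ nat k" using part1 assms by simp
next
  assume "q = 1"
  moreover have "\<gamma> \<noteq> []" using assms(3) by auto
  ultimately show "F1234 k q \<gamma> = F2143 k q \<gamma>" using part2[of \<gamma> k] by simp
next
  assume h: "length \<gamma> \<ge> 2 \<and> q \<ge> 2"
  obtain g1 g2 r where g: "\<gamma> = g1 # g2 # r"
  proof (cases \<gamma>)
    case Nil with h show ?thesis by simp
  next
    case (Cons a t) then show ?thesis using h that by (cases t) auto
  qed
  have g2: "2 \<le> g2" "g2 \<le> g1 + 1" using assms(5)[rule_format, of 0] g by auto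
  have g1: "g1 \<ge> 2" using assms(4) g by simp
  show "F1234 k q \<gamma> = F1234 k (q - 1) \<gamma> + F1234 (\<gamma> ! 0 + 1 - \<gamma> ! 1 + k) q (tl \<gamma>)"
  proof (rule fps_ext)
    fix n
    have "fps_nth (F1234 k q \<gamma>) n = of_nat (card (A k q (g1#g2#r) (Suc (Suc (n + length r)))))"
      using h g by (simp add: F1234_A)
    also have "... = of_nat (card (A k (q-1) (g1#g2#r) (Suc (Suc (n + length r))))) + of_nat (card (A (g1+1-g2+k) q (g2#r) (Suc (n + length r))))"
    proof -
      have "card (A k q (g1#g2#r) (Suc (Suc (n + length r)))) = card (A k (q-1) (g1#g2#r) (Suc (Suc (n + length r)))) + card (A (g1+1-g2+k) q (g2#r) (Suc (n + length r)))"
        by (rule part3) (use h g2 g1 assms(1) in auto)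
      then show ?thesis by simp
    qed
    also have "... = fps_nth (F1234 k (q - 1) \<gamma> + F1234 (\<gamma> ! 0 + 1 - \<gamma> ! 1 + k) q (tl \<gamma>)) n"
      using h g by (simp add: F1234_A)
    finally show "fps_nth (F1234 k q \<gamma>) n = fps_nth (F1234 k (q - 1) \<gamma> + F1234 (\<gamma> ! 0 + 1 - \<gamma> ! 1 + k) q (tl \<gamma>)) n" .
  qed
qed

end
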